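(* Suppose $\mathbf{U}\in\mathbb{R}^{N\times n}$ is the matrix of the first $n$ left singular vectors of a data matrix $\mathbf{X}\in\mathbb{R}^{N\times n_s}$, and $\boldsymbol{\Sigma}\in\mathbb{R}^{n\times n}$ is the corresponding diagonal matrix of (nonzero) singular values $\{\sigma_j\}_{j=1}^n$. Let $\hat{\mathbf{X}}=\mathbf{U}^\intercal\mathbf{X}\in\mathbb{R}^{n\times n_s}$ and $\hat{\mathbf{X}}_t=\mathbf{U}^\intercal\mathbf{X}_t\in\mathbb{R}^{n\times n_s}$, where $\mathbf{X}_t$ is an approximation (e.g. by finite differences) to the time derivative of the snapshots in $\mathbf{X}$. Then the unique solution to the operator inference problem of size $n$ is given by \[ \hat{\mathbf{D}} = \operatorname*{argmin}_{\mathbf{D}\in\mathbb{R}^{n\times n}}\left\|\hat{\mathbf{X}}_t - \mathbf{D}\hat{\mathbf{X}}\right\|^2 = \hat{\mathbf{X}}_t\hat{\mathbf{X}}^\intercal\boldsymbol{\Sigma}^{-2}.\] Moreover, for any $n'<n$, the submatrix $\hat{\mathbf{D}}'\in\mathbb{R}^{n'\times n'}$ formed by extracting the first $n'$ rows and columns of $\hat{\mathbf{D}}$ is the solution to the corresponding operator inference problem of size $n'$ (i.e. the same problem with $\mathbf{U}$ replaced by its first $n'$ columns).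
   Context: Operator inference (OpInf) learns a reduced linear operator $\hat{\mathbf{D}}$ for a reduced model $\dot{\hat{\mathbf{x}}}=\hat{\mathbf{D}}\hat{\mathbf{x}}$ from projected snapshot data by least squares; the norm is the Frobenius norm. *)

theory Defs
  imports "Jordan_Normal_Form.Matrix"
begin

definition fro_sq :: "real mat \<Rightarrow> real" where
  "fro_sq A = (\<Sum>i<dim_row A. \<Sum>j<dim_col A. (A $$ (i,j))^2)"

definition is_svd :: "real mat \<Rightarrow> real mat \<Rightarrow> real mat \<Rightarrow> real mat \<Rightarrow> bool" where
  "is_svd X W S V \<longleftrightarrow>
     W \<in> carrier_mat (dim_row X) (dim_row X) \<and>
     V \<in> carrier_mat (dim_col X) (dim_col X) \<and>
     S \<in> carrier_mat (dim_row X) (dim_col X) \<and>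
     transpose_mat W * W = 1\<^sub>m (dim_row X) \<and>
     transpose_mat V * V = 1\<^sub>m (dim_col X) \<and>
     (\<forall>i<dim_row X. \<forall>j<dim_col X. i \<noteq> j \<longrightarrow> S $$ (i,j) = 0) \<and>
     (\<forall>i<min (dim_row X) (dim_col X). S $$ (i,i) \<ge> 0) \<and>
     (\<forall>i j. i \<le> j \<longrightarrow> j < min (dim_row X) (dim_col X) \<longrightarrow> S $$ (j,j) \<le> S $$ (i,i)) \<and>
     X = W * S * transpose_mat V"

definition first_cols :: "nat \<Rightarrow> real mat \<Rightarrow> real mat" where
  "first_cols k A = mat (dim_row A) k (\<lambda>(i,j). A $$ (i,j))"

definition lead_block :: "nat \<Rightarrow> real mat \<Rightarrow> real mat" where
  "lead_block k A = mat k k (\<lambda>(i,j). A $$ (i,j))"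

definition opinf_min :: "real mat \<Rightarrow> real mat \<Rightarrow> real mat \<Rightarrow> real mat \<Rightarrow> bool" where
  "opinf_min U X Xt D \<longleftrightarrow>
     D \<in> carrier_mat (dim_col U) (dim_col U) \<and>
     (\<forall>D' \<in> carrier_mat (dim_col U) (dim_col U).
        fro_sq (transpose_mat U * Xt - D * (transpose_mat U * X))
        \<le> fro_sq (transpose_mat U * Xt - D' * (transpose_mat U * X)))"

end

theory Submission imports Defs begin

lemma fro_sq_nonneg: "fro_sq M \<ge> 0"
  unfolding fro_sq_def by (intro sum_nonneg) auto

lemma fro_sq_zero: assumes "fro_sq M = 0" "i < dim_row M" "j < dim_col M" shows "M $$ (i,j) = 0"
proof -
  have "\<forall>i\<in>{..<dim_row M}. (\<Sum>j<dim_col M. (M $$ (i,j))^2) = 0"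
    using assms(1) unfolding fro_sq_def by (subst sum_nonneg_eq_0_iff[symmetric]) (auto intro: sum_nonneg)
  hence "(\<Sum>j<dim_col M. (M $$ (i,j))^2) = 0" using assms by auto
  hence "\<forall>j\<in>{..<dim_col M}. (M $$ (i,j))^2 = 0" by (subst sum_nonneg_eq_0_iff[symmetric]) auto
  thus ?thesis using assms by auto
qed

lemma fro_sq_diff: assumes "E \<in> carrier_mat r c" "F \<in> carrier_mat r c"
  shows "fro_sq (E - F) = fro_sq E + fro_sq F - 2 * (\<Sum>i<r. \<Sum>j<c. E$$(i,j) * F$$(i,j))"
  using assms unfolding fro_sq_def
  by (simp add: power2_diff sum.distrib sum_subtractf sum_distrib_left mult.assoc)

lemma ls_main:
  fixes A B :: "real mat" and d :: "nat \<Rightarrow> real"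
  assumes A: "A \<in> carrier_mat n m" and B: "B \<in> carrier_mat k m"
    and G: "A * transpose_mat A = mat_diag n d" and nz: "\<forall>j<n. d j \<noteq> 0"
    and D: "D \<in> carrier_mat k n"
  defines "D0 \<equiv> B * transpose_mat A * mat_diag n (\<lambda>j. 1 / d j)"
  shows "fro_sq (B - D * A) = fro_sq (B - D0 * A) + fro_sq ((D - D0) * A)"
    "fro_sq ((D - D0) * A) = 0 \<Longrightarrow> D = D0"
proof -
  have D0: "D0 \<in> carrier_mat k n" using A B unfolding D0_def by (meson mult_carrier_mat transpose_carrier_mat mat_diag_dim)
  have SG: "mat_diag n d * mat_diag n (\<lambda>j. 1 / d j) = 1\<^sub>m n"
    unfolding mat_diag_diag using nz by (intro eq_matI) (auto simp: mat_diag_def)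
  define E where "E = B - D0 * A"
  define C where "C = D - D0"
  have E: "E \<in> carrier_mat k m" using A B D0 unfolding E_def by auto
  have C: "C \<in> carrier_mat k n" using D D0 unfolding C_def by auto
  have EAT: "E * transpose_mat A = 0\<^sub>m k n"
  proof -
    have "E * transpose_mat A = B * transpose_mat A - D0 * A * transpose_mat A"
      unfolding E_def using A B D0 by (simp add: minus_mult_distrib_mat[of _ k m])
    also have "D0 * A * transpose_mat A = D0 * (A * transpose_mat A)" using D0 A by simp
    also have "\<dots> = B * transpose_mat A * (mat_diag n (\<lambda>j. 1 / d j) * mat_diag n d)"
      unfolding D0_def G using A B by (simp add: assoc_mult_mat[of _ k n _ n _ n])
    also have "mat_diag n (\<lambda>j. 1 / d j) * mat_diag n d = 1\<^sub>m n"
      unfolding mat_diag_diag using nz by (intro eq_matI) (auto simp: mat_diag_def)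
    finally show ?thesis using A B by (intro eq_matI) auto
  qed
  have eq: "B - D * A = E - C * A"
    unfolding E_def C_def using A B D D0
    by (simp add: minus_mult_distrib_mat[of _ k n] ) (intro eq_matI, auto)
  have cross: "(\<Sum>i<k. \<Sum>j<m. E$$(i,j) * (C*A)$$(i,j)) = 0"
  proof -
    have "(\<Sum>i<k. \<Sum>j<m. E$$(i,j) * (C*A)$$(i,j)) = (\<Sum>i<k. \<Sum>j<m. \<Sum>l<n. E$$(i,j) * C$$(i,l) * A$$(l,j))"
      using A C by (intro sum.cong refl) (auto simp: scalar_prod_def sum_distrib_left lessThan_atLeast0 mult.assoc)
    also have "\<dots> = (\<Sum>i<k. \<Sum>l<n. C$$(i,l) * (\<Sum>j<m. E$$(i,j) * A$$(l,j)))"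
      by (rule sum.cong[OF refl], subst sum.swap) (simp add: sum_distrib_left ac_simps)
    also have "\<dots> = (\<Sum>i<k. \<Sum>l<n. C$$(i,l) * (E * transpose_mat A)$$(i,l))"
      using A E by (intro sum.cong refl) (auto simp: scalar_prod_def lessThan_atLeast0)
    also have "\<dots> = 0" unfolding EAT by simp
    finally show ?thesis .
  qed
  show "fro_sq (B - D * A) = fro_sq (B - D0 * A) + fro_sq ((D - D0) * A)"
    unfolding eq fro_sq_diff[OF E mult_carrier_mat[OF C A]] cross
    unfolding E_def C_def by simp
  assume z: "fro_sq ((D - D0) * A) = 0"
  have CA: "C * A = 0\<^sub>m k m"
    using fro_sq_zero[OF z[folded C_def]] C A by (intro eq_matI) auto
  have "C = C * (A * transpose_mat A * mat_diag n (\<lambda>j. 1 / d j))"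
    unfolding G SG using C by simp
  also have "\<dots> = (C * A) * transpose_mat A * mat_diag n (\<lambda>j. 1 / d j)"
  proof -
    have 1: "(C * A) * transpose_mat A = C * (A * transpose_mat A)"
      using C A by (intro assoc_mult_mat[of _ k n _ m _ n]) auto
    have 2: "C * (A * transpose_mat A) * mat_diag n (\<lambda>j. 1 / d j) = C * (A * transpose_mat A * mat_diag n (\<lambda>j. 1 / d j))"
      using C A by (intro assoc_mult_mat[of _ k n _ n _ n]) auto
    show ?thesis unfolding 1 2 ..
  qed
  also have "\<dots> = 0\<^sub>m k n" unfolding CA using A by (intro eq_matI) (auto simp: mat_diag_def)
  finally have "\<forall>i<k. \<forall>j<n. (D - D0) $$ (i,j) = 0" unfolding C_def by auto
  then show "D = D0" using D D0 by (intro eq_matI) auto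
qed
lemma opinf_char:
  fixes U X Xt :: "real mat" and d :: "nat \<Rightarrow> real"
  assumes U: "U \<in> carrier_mat N n" and X: "X \<in> carrier_mat N m" and Xt: "Xt \<in> carrier_mat N m"
    and G: "(transpose_mat U * X) * transpose_mat (transpose_mat U * X) = mat_diag n d"
    and nz: "\<forall>j<n. d j \<noteq> 0"
  shows "opinf_min U X Xt D \<longleftrightarrow>
    D = (transpose_mat U * Xt) * transpose_mat (transpose_mat U * X) * mat_diag n (\<lambda>j. 1 / d j)"
proof -
  define A where "A = transpose_mat U * X"
  define B where "B = transpose_mat U * Xt"
  define D0 where "D0 = B * transpose_mat A * mat_diag n (\<lambda>j. 1 / d j)"
  have A: "A \<in> carrier_mat n m" using U X unfolding A_def by auto
  have B: "B \<in> carrier_mat n m" using U Xt unfolding B_def by auto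
  have D0: "D0 \<in> carrier_mat n n" using A B unfolding D0_def by (meson mult_carrier_mat transpose_carrier_mat mat_diag_dim)
  have G': "A * transpose_mat A = mat_diag n d" using G unfolding A_def .
  note L = ls_main[OF A B G' nz, folded D0_def]
  have dc: "dim_col U = n" using U by auto
  show ?thesis
    unfolding opinf_min_def dc A_def[symmetric] B_def[symmetric] D0_def[symmetric]
  proof
    assume h: "D \<in> carrier_mat n n \<and> (\<forall>D'\<in>carrier_mat n n. fro_sq (B - D * A) \<le> fro_sq (B - D' * A))"
    hence D: "D \<in> carrier_mat n n" by auto
    have "fro_sq (B - D * A) \<le> fro_sq (B - D0 * A)" using h D0 by auto
    hence "fro_sq ((D - D0) * A) \<le> 0" using L(1)[OF D] by simp
    hence "fro_sq ((D - D0) * A) = 0" using fro_sq_nonneg[of "(D - D0) * A"] by simp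
    thus "D = D0" using L(2)[OF D] by simp
  next
    assume "D = D0"
    thus "D \<in> carrier_mat n n \<and> (\<forall>D'\<in>carrier_mat n n. fro_sq (B - D * A) \<le> fro_sq (B - D' * A))"
    proof (intro conjI ballI)
      fix D' :: "real mat" assume D': "D' \<in> carrier_mat n n"
      show "fro_sq (B - D * A) \<le> fro_sq (B - D' * A)"
        unfolding \<open>D = D0\<close> L(1)[OF D'] using fro_sq_nonneg[of "(D' - D0) * A"] by linarith
    qed (use D0 \<open>D = D0\<close> in simp)
  qed
qed

lemma svd_proj:
  fixes X W S V :: "real mat"
  assumes X: "X \<in> carrier_mat N ns" and svd: "is_svd X W S V" and n: "n \<le> min N ns"
  shows "transpose_mat (first_cols n W) * X = mat n ns (\<lambda>(i,k). S $$ (i,i) * V $$ (k,i))"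
proof -
  have W: "W \<in> carrier_mat N N" and V: "V \<in> carrier_mat ns ns" and S: "S \<in> carrier_mat N ns"
    and WW: "transpose_mat W * W = 1\<^sub>m N" and VV: "transpose_mat V * V = 1\<^sub>m ns"
    and Sd: "\<forall>i<N. \<forall>j<ns. i \<noteq> j \<longrightarrow> S $$ (i,j) = 0"
    and XW: "X = W * S * transpose_mat V"
    using svd X unfolding is_svd_def by auto
  define F where "F = transpose_mat (first_cols n W)"
  have F: "F \<in> carrier_mat n N" using W unfolding F_def first_cols_def by auto
  define P where "P = mat n N (\<lambda>(i,j). if i = j then 1 else (0::real))"
  have FW: "F * W = P"
  proof (rule eq_matI)
    fix i j assume ij: "i < dim_row P" "j < dim_col P"
    have "(F * W) $$ (i,j) = (transpose_mat W * W) $$ (i,j)"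
      using ij W n unfolding F_def P_def first_cols_def by (auto simp: scalar_prod_def)
    also have "\<dots> = P $$ (i,j)" using ij n unfolding WW P_def by auto
    finally show "(F * W) $$ (i,j) = P $$ (i,j)" .
  qed (use F W P_def in auto)
  have PS: "P * S = mat n ns (\<lambda>(i,k). if i = k then S $$ (i,i) else 0)"
  proof (rule eq_matI)
    fix i k assume ik: "i < dim_row (mat n ns (\<lambda>(i,k). if i = k then S $$ (i,i) else 0))"
      "k < dim_col (mat n ns (\<lambda>(i,k). if i = k then S $$ (i,i) else 0))"
    have "(P * S) $$ (i,k) = (\<Sum>l\<in>{0..<N}. (if i = l then 1 else 0) * S $$ (l,k))"
      using ik S n unfolding P_def by (auto simp: scalar_prod_def)
    also have "\<dots> = (\<Sum>l\<in>{0..<N}. if l = i then S $$ (l,k) else 0)" by (rule sum.cong) auto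
    also have "\<dots> = S $$ (i,k)" using ik n by simp
    also have "\<dots> = (if i = k then S $$ (i,i) else 0)" using Sd ik n by auto
    finally show "(P * S) $$ (i,k) = mat n ns (\<lambda>(i,k). if i = k then S $$ (i,i) else 0) $$ (i,k)"
      using ik by simp
  qed (use S P_def in auto)
  have "F * X = P * S * transpose_mat V"
  proof -
    have "F * X = F * (W * S * transpose_mat V)" using XW by simp
    also have "\<dots> = F * W * S * transpose_mat V"
      using F W S V by (simp add: assoc_mult_mat[of _ n N _ N _ ns] assoc_mult_mat[of _ n N _ ns _ ns]
        assoc_mult_mat[of _ N N _ ns _ ns])
    finally show ?thesis unfolding FW .
  qed
  also have "\<dots> = mat n ns (\<lambda>(i,k). S $$ (i,i) * V $$ (k,i))"
  proof (rule eq_matI)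
    fix i k assume ik: "i < dim_row (mat n ns (\<lambda>(i,k). S $$ (i,i) * V $$ (k,i)))"
      "k < dim_col (mat n ns (\<lambda>(i,k). S $$ (i,i) * V $$ (k,i)))"
    have "(P * S * transpose_mat V) $$ (i,k) = (\<Sum>l\<in>{0..<ns}. (if i = l then S $$ (i,i) else 0) * V $$ (k,l))"
      using ik V n unfolding PS by (auto simp: scalar_prod_def)
    also have "\<dots> = (\<Sum>l\<in>{0..<ns}. if l = i then S $$ (i,i) * V $$ (k,l) else 0)" by (rule sum.cong) auto
    also have "\<dots> = S $$ (i,i) * V $$ (k,i)" using ik n by simp
    finally show "(P * S * transpose_mat V) $$ (i,k) = mat n ns (\<lambda>(i,k). S $$ (i,i) * V $$ (k,i)) $$ (i,k)"
      using ik by simp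
  qed (use PS V in auto)
  finally show ?thesis unfolding F_def .
qed

lemma svd_gram:
  fixes X W S V :: "real mat"
  assumes X: "X \<in> carrier_mat N ns" and svd: "is_svd X W S V" and n: "n \<le> min N ns"
  shows "(transpose_mat (first_cols n W) * X) * transpose_mat (transpose_mat (first_cols n W) * X)
    = mat_diag n (\<lambda>j. (S $$ (j,j))^2)"
proof -
  have V: "V \<in> carrier_mat ns ns" and VV: "transpose_mat V * V = 1\<^sub>m ns"
    using svd X unfolding is_svd_def by auto
  show ?thesis unfolding svd_proj[OF X svd n]
  proof (rule eq_matI)
    fix i j assume ij: "i < dim_row (mat_diag n (\<lambda>j. (S $$ (j,j))^2))" "j < dim_col (mat_diag n (\<lambda>j. (S $$ (j,j))^2))"
    hence ij': "i < n" "j < n" by (auto simp: mat_diag_def)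
    have "(mat n ns (\<lambda>(i,k). S $$ (i,i) * V $$ (k,i)) * transpose_mat (mat n ns (\<lambda>(i,k). S $$ (i,i) * V $$ (k,i)))) $$ (i,j)
      = (\<Sum>k\<in>{0..<ns}. S $$ (i,i) * V $$ (k,i) * (S $$ (j,j) * V $$ (k,j)))"
      using ij' by (simp add: scalar_prod_def)
    also have "\<dots> = S $$ (i,i) * S $$ (j,j) * (\<Sum>k\<in>{0..<ns}. V $$ (k,i) * V $$ (k,j))"
      by (simp add: sum_distrib_left ac_simps)
    also have "(\<Sum>k\<in>{0..<ns}. V $$ (k,i) * V $$ (k,j)) = (transpose_mat V * V) $$ (i,j)"
      using V ij' n by (simp add: scalar_prod_def)
    also have "\<dots> = (if i = j then 1 else 0)" unfolding VV using ij' n by simp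
    finally show "(mat n ns (\<lambda>(i,k). S $$ (i,i) * V $$ (k,i)) * transpose_mat (mat n ns (\<lambda>(i,k). S $$ (i,i) * V $$ (k,i)))) $$ (i,j)
      = mat_diag n (\<lambda>j. (S $$ (j,j))^2) $$ (i,j)" using ij' by (simp add: mat_diag_def power2_eq_square)
  qed (auto simp: mat_diag_def)
qed

lemma part1:
  fixes X Xt W S V :: "real mat" and n N ns :: nat
  assumes X: "X \<in> carrier_mat N ns"
    and Xt: "Xt \<in> carrier_mat N ns"
    and svd: "is_svd X W S V"
    and n: "n \<le> min N ns"
    and nz: "\<forall>j<n. S $$ (j,j) \<noteq> 0"
  shows "opinf_min (first_cols n W) X Xt D \<longleftrightarrow>
    D = (transpose_mat (first_cols n W) * Xt) * transpose_mat (transpose_mat (first_cols n W) * X)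
        * mat_diag n (\<lambda>j. 1 / (S $$ (j,j))^2)"
proof -
  have W: "W \<in> carrier_mat N N" using svd X unfolding is_svd_def by auto
  have U: "first_cols n W \<in> carrier_mat N n" using W unfolding first_cols_def by auto
  show ?thesis
    by (rule opinf_char[OF U X Xt svd_gram[OF X svd n]]) (use nz in auto)
qed

lemma diag_entry: "i < dim_row Y \<Longrightarrow> j < m \<Longrightarrow> dim_col Y = m \<Longrightarrow>
  (Y * mat_diag m f) $$ (i,j) = Y $$ (i,j) * (f j :: real)"
  by (simp add: mat_diag_def scalar_prod_def if_distrib cong: if_cong)

lemma proj_entry: "n \<le> N \<Longrightarrow> W \<in> carrier_mat N N \<Longrightarrow> Y \<in> carrier_mat N ns \<Longrightarrow> i < n \<Longrightarrow> k < ns \<Longrightarrow>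
  (transpose_mat (first_cols n W) * Y) $$ (i,k) = (\<Sum>l\<in>{0..<N}. W $$ (l,i) * (Y $$ (l,k) :: real))"
  by (simp add: first_cols_def scalar_prod_def)

lemma mult_T_entry: "A \<in> carrier_mat r c \<Longrightarrow> B \<in> carrier_mat q c \<Longrightarrow> i < r \<Longrightarrow> j < q \<Longrightarrow>
  (A * transpose_mat B) $$ (i,j) = (\<Sum>k\<in>{0..<c}. A $$ (i,k) * (B $$ (j,k) :: real))"
  by (simp add: scalar_prod_def)

theorem proposition1:
  fixes X Xt W S V :: "real mat" and n N ns :: nat
  assumes X: "X \<in> carrier_mat N ns"
    and Xt: "Xt \<in> carrier_mat N ns"
    and svd: "is_svd X W S V"
    and n: "n \<le> min N ns"
    and nz: "\<forall>j<n. S $$ (j,j) \<noteq> 0"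
  defines "U \<equiv> first_cols n W"
    and "Xh \<equiv> transpose_mat (first_cols n W) * X"
    and "Xth \<equiv> transpose_mat (first_cols n W) * Xt"
    and "Sigma_inv2 \<equiv> mat_diag n (\<lambda>j. 1 / (S $$ (j,j))^2)"
  shows "(\<forall>D. opinf_min U X Xt D \<longleftrightarrow> D = Xth * transpose_mat Xh * Sigma_inv2)
     \<and> (\<forall>n' < n. \<forall>D. opinf_min (first_cols n' U) X Xt D \<longleftrightarrow>
           D = lead_block n' (Xth * transpose_mat Xh * Sigma_inv2))"
proof (intro conjI allI impI)
  fix D show "opinf_min U X Xt D \<longleftrightarrow> D = Xth * transpose_mat Xh * Sigma_inv2"
    unfolding U_def Xh_def Xth_def Sigma_inv2_def by (rule part1[OF X Xt svd n nz])
next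
  fix n' D assume n': "n' < n"
  have W: "W \<in> carrier_mat N N" using svd X unfolding is_svd_def by auto
  have fc: "first_cols n' U = first_cols n' W"
    unfolding U_def first_cols_def using n' n W by (intro eq_matI) auto
  have eq: "(transpose_mat (first_cols n' W) * Xt) * transpose_mat (transpose_mat (first_cols n' W) * X)
        * mat_diag n' (\<lambda>j. 1 / (S $$ (j,j))^2) = lead_block n' (Xth * transpose_mat Xh * Sigma_inv2)"
  proof (rule eq_matI)
    fix i j assume ij: "i < dim_row (lead_block n' (Xth * transpose_mat Xh * Sigma_inv2))"
      "j < dim_col (lead_block n' (Xth * transpose_mat Xh * Sigma_inv2))"
    hence ij': "i < n'" "j < n'" by (auto simp: lead_block_def)
    have fcW: "\<And>m. first_cols m W \<in> carrier_mat N m" using W by (auto simp: first_cols_def)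
    have key: "\<And>m. n' \<le> m \<Longrightarrow> m \<le> N \<Longrightarrow>
      ((transpose_mat (first_cols m W) * Xt) * transpose_mat (transpose_mat (first_cols m W) * X)
        * mat_diag m (\<lambda>j. 1 / (S $$ (j,j))^2)) $$ (i,j)
      = (\<Sum>k\<in>{0..<ns}. (\<Sum>l\<in>{0..<N}. W $$ (l,i) * Xt $$ (l,k)) * (\<Sum>l\<in>{0..<N}. W $$ (l,j) * X $$ (l,k)))
        * (1 / (S $$ (j,j))^2)"
    proof -
      fix m assume m: "n' \<le> m" "m \<le> N"
      have c1: "transpose_mat (first_cols m W) * Xt \<in> carrier_mat m ns" using fcW[of m] Xt by (meson mult_carrier_mat transpose_carrier_mat)
      have c2: "transpose_mat (first_cols m W) * X \<in> carrier_mat m ns" using fcW[of m] X by (meson mult_carrier_mat transpose_carrier_mat)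
      have e1: "((transpose_mat (first_cols m W) * Xt) * transpose_mat (transpose_mat (first_cols m W) * X)) $$ (i,j)
        = (\<Sum>k\<in>{0..<ns}. (transpose_mat (first_cols m W) * Xt) $$ (i,k) * (transpose_mat (first_cols m W) * X) $$ (j,k))"
        using ij' m by (intro mult_T_entry[OF c1 c2]) auto
      also have "\<dots> = (\<Sum>k\<in>{0..<ns}. (\<Sum>l\<in>{0..<N}. W $$ (l,i) * Xt $$ (l,k)) * (\<Sum>l\<in>{0..<N}. W $$ (l,j) * X $$ (l,k)))"
        using proj_entry[OF m(2) W Xt] proj_entry[OF m(2) W X] ij' m
        by (intro sum.cong refl) auto
      finally have e2: "((transpose_mat (first_cols m W) * Xt) * transpose_mat (transpose_mat (first_cols m W) * X)) $$ (i,j)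
        = (\<Sum>k\<in>{0..<ns}. (\<Sum>l\<in>{0..<N}. W $$ (l,i) * Xt $$ (l,k)) * (\<Sum>l\<in>{0..<N}. W $$ (l,j) * X $$ (l,k)))" .
      show "?thesis m"
        by (subst diag_entry) (use c1 c2 ij' m e2 in auto)
    qed
    show "((transpose_mat (first_cols n' W) * Xt) * transpose_mat (transpose_mat (first_cols n' W) * X)
        * mat_diag n' (\<lambda>j. 1 / (S $$ (j,j))^2)) $$ (i,j) = lead_block n' (Xth * transpose_mat Xh * Sigma_inv2) $$ (i,j)"
      unfolding lead_block_def Xth_def Xh_def Sigma_inv2_def
      using key[of n'] key[of n] n n' ij' by auto
  qed (auto simp: lead_block_def first_cols_def mat_diag_def)
  show "opinf_min (first_cols n' U) X Xt D \<longleftrightarrow> D = lead_block n' (Xth * transpose_mat Xh * Sigma_inv2)"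
    unfolding fc eq[symmetric] using n' n nz by (intro part1[OF X Xt svd]) auto
qed

end
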